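(* In the one-counter game $\mathcal{G}$ defined below, for every $j\in\{1,\dots,2^{2^n}\}$, every $d\in\Delta$ and every $i\in\mathbb{N}$ such that the configuration $C^w_i$ exists, $\mathrm{Verifier}$ has a strategy from the configuration $((j,d),i)$ guaranteeing that the play reaches the state $s'_F$ if and only if $C^w_i(j)=d$. In particular, $((1,(q_F,a)),i)$ is winning for $\mathrm{Verifier}$ iff $C^w_i(1)=(q_F,a)$, i.e. iff $\mathcal{T}$ accepts $w$ after $i$ steps.
   Context: Let $\mathcal{T}=(Q,q_0,\Sigma,\delta,q_F)$ be a deterministic Turing machine with tape alphabet $\Sigma=\{0,1,\#,a,r\}$ ($\#$ blank; $\mathcal{T}$ accepts immediately on reading $a$ and rejects immediately on reading $r$), transition function $\delta:Q\times\Sigma\to Q\times\Sigma\times\{\mathrm{Left},\mathrm{Right}\}$ with components $\delta_1,\delta_2,\delta_3$, and accepting state $q_F$. Let $w=w_1\dots w_{|w|}$ be an input, $n=|w|^k$, and assume $\mathcal{T}$ uses only cells $1,\dots,2^{2^n}$, with extra cells $0$ and $2^{2^n}+1$ initially holding $a$, the head initially on cell 1, and that if $\mathcal{T}$ halts accepting it does so in state $q_F$ with the head on cell 1 holding $a$. Let $\Delta=\Sigma\cup(Q\times\Sigma)$. The run of $\mathcal{T}$ on $w$ is the sequence of configurations $C^w_0C^w_1\dots$, each $C^w_i\in\Delta^{2^{2^n}+2}$ (indexed $0,\dots,2^{2^n}+1$) containing exactly one element of $Q\times\Sigma$ marking the state and head position; $C^w_0=a\,(q_0,w_1)\,w_2\dots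 w_{|w|}\,\#\dots\#\,a$; $C^w_i(j)$ is the $j$-th element. For $d\in\Delta$, $\mathrm{Pre}(d)$ is the set of triples: all $(d_1,d_2,d_3)\in\Sigma^3$ with $d_2=d$; all $((q,b),d_2,d_3)\in(Q\times\Sigma)\times\Sigma^2$ with either $d=(\delta_1(q,b),d_2)$ and $\delta_3(q,b)=\mathrm{Right}$, or $d=d_2$ and $\delta_3(q,b)\neq\mathrm{Right}$; all $(d_1,d_2,(q,b))\in\Sigma^2\times(Q\times\Sigma)$ with either $d=(\delta_1(q,b),d_2)$ and $\delta_3(q,b)=\mathrm{Left}$, or $d=d_2$ and $\delta_3(q,b)\neq\mathrm{Left}$; all $(d_1,(q,b),d_3)\in\Sigma\times(Q\times\Sigma)\times\Sigma$ with $d=\delta_2(q,b)$. The OCG $\mathcal{G}$ has players $\mathrm{Verifier},\mathrm{Falsifier}$, states $S'=(\{0,\dots,2^{2^n}+1\}\times(\Delta\cup\Delta^3))\cup\{s'_0,s'_z,s'_r,s'_F\}$, with $\mathrm{Verifier}$ controlling $(\{0,\dots,2^{2^n}+1\}\times\Delta)\cup\{s'_0\}$ and $\mathrm{Falsifier}$ the rest. Its transitions (state, weight, state) are exactly: $(s'_0,1,s'_0)$; $(s'_0,0,(1,(q_F,a)))$; $((j,d),0,(j,(d_1,d_2,d_3)))$ for $j\in\{1,\dots,2^{2^n}\}$, $(d_1,d_2,d_3)\in\mathrm{Pre}(d)$; for $j\in\{0,2^{2^n}+1\}$: $((j,a),0,s'_F)$ and $((j,d),0,s'_r)$ for $d\neq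 a$; $((j,d),0,s'_z)$ for all $(j,d)$ with $C^w_0(j)=d$; $(s'_z,0,s'_F)$; $(s'_z,-1,s'_r)$; and for $j\in\{1,\dots,2^{2^n}\}$ and $d_1,d_2,d_3\in\Delta$: $((j,(d_1,d_2,d_3)),-1,(j-1,d_1))$, $((j,(d_1,d_2,d_3)),-1,(j,d_2))$, $((j,(d_1,d_2,d_3)),-1,(j+1,d_3))$. Configurations are (state, counter value) pairs with counter in $\mathbb{N}$; a transition with weight $-1$ is disabled at counter value 0; plays are maximal sequences of configurations following enabled transitions (a play with no enabled move ends). A configuration is winning for $\mathrm{Verifier}$ if he has a strategy ensuring every compatible play visits $s'_F$. *)

theory Defs
  imports Main
begin

text \<open>Tape alphabet Sigma = {0,1,#,a,r}.\<close>
datatype sym = S0 | S1 | Blank | Acc | Rej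

datatype dir = MLeft | MRight

text \<open>Delta = Sigma \<union> (Q \<times> Sigma).\<close>
datatype 'q cell = Sym sym | Head 'q sym

fun is_head :: "'q cell \<Rightarrow> bool" where
  "is_head (Sym _) = False"
| "is_head (Head _ _) = True"

fun sym_of :: "'q cell \<Rightarrow> sym" where
  "sym_of (Sym s) = s"
| "sym_of (Head _ s) = s"

fun state_of :: "'q cell \<Rightarrow> 'q" where
  "state_of (Head q _) = q"
| "state_of (Sym _) = undefined"

type_synonym 'q tm_delta = "'q \<Rightarrow> sym \<Rightarrow> 'q \<times> sym \<times> dir"

definition delta1 :: "'q tm_delta \<Rightarrow> 'q \<Rightarrow> sym \<Rightarrow> 'q" where
  "delta1 \<delta> q b = fst (\<delta> q b)"
definition delta2 :: "'q tm_delta \<Rightarrow> 'q \<Rightarrow> sym \<Rightarrow> sym" where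
  "delta2 \<delta> q b = fst (snd (\<delta> q b))"
definition delta3 :: "'q tm_delta \<Rightarrow> 'q \<Rightarrow> sym \<Rightarrow> dir" where
  "delta3 \<delta> q b = snd (snd (\<delta> q b))"

text \<open>A configuration: cell index j \<mapsto> C(j); only the indices 0..N+1 are meaningful
  (N = 2^2^n), the other indices hold blanks and are never touched.\<close>
type_synonym 'q config = "nat \<Rightarrow> 'q cell"

definition inp :: "sym list \<Rightarrow> nat \<Rightarrow> sym" where
  "inp w j = (if 1 \<le> j \<and> j \<le> length w then w ! (j - 1) else Blank)"

definition init_conf :: "'q \<Rightarrow> nat \<Rightarrow> sym list \<Rightarrow> 'q config" where
  "init_conf q0 N w j =
     (if j = 0 \<or> j = N + 1 then Sym Acc
      else if j = 1 then Head q0 (inp w 1)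
      else if j \<le> N then Sym (inp w j)
      else Sym Blank)"

definition head_pos :: "'q config \<Rightarrow> nat" where
  "head_pos C = (LEAST p. is_head (C p))"

definition tm_step :: "'q tm_delta \<Rightarrow> 'q config \<Rightarrow> 'q config" where
  "tm_step \<delta> C =
     (let p = head_pos C; q = state_of (C p); b = sym_of (C p);
          p' = (if delta3 \<delta> q b = MRight then p + 1 else p - 1)
      in C(p := Sym (delta2 \<delta> q b), p' := Head (delta1 \<delta> q b) (sym_of (C p'))))"

definition halted :: "'q config \<Rightarrow> bool" where
  "halted C = (sym_of (C (head_pos C)) \<in> {Acc, Rej})"

definition tm_run :: "'q tm_delta \<Rightarrow> 'q \<Rightarrow> nat \<Rightarrow> sym list \<Rightarrow> nat \<Rightarrow> 'q config" where
  "tm_run \<delta> q0 N w i = (tm_step \<delta> ^^ i) (init_conf q0 N w)"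

text \<open>C^w_i exists: the machine has not halted in any earlier configuration.\<close>
definition run_exists :: "'q tm_delta \<Rightarrow> 'q \<Rightarrow> nat \<Rightarrow> sym list \<Rightarrow> nat \<Rightarrow> bool" where
  "run_exists \<delta> q0 N w i = (\<forall>i' < i. \<not> halted (tm_run \<delta> q0 N w i'))"

definition Pre :: "'q tm_delta \<Rightarrow> 'q cell \<Rightarrow> ('q cell \<times> 'q cell \<times> 'q cell) set" where
  "Pre \<delta> d =
     {(Sym d1, Sym d2, Sym d3) | d1 d2 d3. d = Sym d2}
   \<union> {(Head q b, Sym d2, Sym d3) | q b d2 d3.
        (d = Head (delta1 \<delta> q b) d2 \<and> delta3 \<delta> q b = MRight)
      \<or> (d = Sym d2 \<and> delta3 \<delta> q b \<noteq> MRight)}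
   \<union> {(Sym d1, Sym d2, Head q b) | d1 d2 q b.
        (d = Head (delta1 \<delta> q b) d2 \<and> delta3 \<delta> q b = MLeft)
      \<or> (d = Sym d2 \<and> delta3 \<delta> q b \<noteq> MLeft)}
   \<union> {(Sym d1, Head q b, Sym d3) | d1 q b d3. d = Sym (delta2 \<delta> q b)}"

text \<open>A game arena on configurations 'c: move relation mv, and vpos x says
  the configuration x belongs to Verifier (others belong to Falsifier).\<close>

definition legal_strategy :: "('c \<Rightarrow> 'c \<Rightarrow> bool) \<Rightarrow> ('c \<Rightarrow> bool) \<Rightarrow> ('c list \<Rightarrow> 'c) \<Rightarrow> bool" where
  "legal_strategy mv vpos \<sigma> =
     (\<forall>h. h \<noteq> [] \<and> vpos (last h) \<and> (\<exists>y. mv (last h) y) \<longrightarrow> mv (last h) (\<sigma> h))"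

definition fin_play :: "('c \<Rightarrow> 'c \<Rightarrow> bool) \<Rightarrow> ('c \<Rightarrow> bool) \<Rightarrow> ('c list \<Rightarrow> 'c) \<Rightarrow> 'c \<Rightarrow> 'c list \<Rightarrow> bool" where
  "fin_play mv vpos \<sigma> x xs =
     (xs \<noteq> [] \<and> hd xs = x \<and>
      (\<forall>k. Suc k < length xs \<longrightarrow>
         mv (xs ! k) (xs ! Suc k) \<and> (vpos (xs ! k) \<longrightarrow> xs ! Suc k = \<sigma> (take (Suc k) xs))) \<and>
      \<not> (\<exists>y. mv (last xs) y))"

definition inf_play :: "('c \<Rightarrow> 'c \<Rightarrow> bool) \<Rightarrow> ('c \<Rightarrow> bool) \<Rightarrow> ('c list \<Rightarrow> 'c) \<Rightarrow> 'c \<Rightarrow> (nat \<Rightarrow> 'c) \<Rightarrow> bool" where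
  "inf_play mv vpos \<sigma> x f =
     (f 0 = x \<and>
      (\<forall>k. mv (f k) (f (Suc k)) \<and> (vpos (f k) \<longrightarrow> f (Suc k) = \<sigma> (map f [0..<Suc k]))))"

definition reach_wins :: "('c \<Rightarrow> 'c \<Rightarrow> bool) \<Rightarrow> ('c \<Rightarrow> bool) \<Rightarrow> ('c \<Rightarrow> bool) \<Rightarrow> 'c \<Rightarrow> bool" where
  "reach_wins mv vpos goal x =
     (\<exists>\<sigma>. legal_strategy mv vpos \<sigma> \<and>
        (\<forall>xs. fin_play mv vpos \<sigma> x xs \<longrightarrow> (\<exists>y \<in> set xs. goal y)) \<and>
        (\<forall>f. inf_play mv vpos \<sigma> x f \<longrightarrow> (\<exists>k. goal (f k))))"

datatype 'q gstate = Gs0 | Gsz | Gsr | GsF | Cell nat "'q cell" | Tri nat "'q cell" "'q cell" "'q cell"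

fun verifier_state :: "'q gstate \<Rightarrow> bool" where
  "verifier_state Gs0 = True"
| "verifier_state (Cell _ _) = True"
| "verifier_state _ = False"

definition ocg_trans :: "'q tm_delta \<Rightarrow> 'q \<Rightarrow> 'q \<Rightarrow> nat \<Rightarrow> sym list \<Rightarrow> ('q gstate \<times> int \<times> 'q gstate) set" where
  "ocg_trans \<delta> q0 qF N w =
     {(Gs0, 1, Gs0), (Gs0, 0, Cell 1 (Head qF Acc))}
   \<union> {(Cell j d, 0, Tri j d1 d2 d3) | j d d1 d2 d3. 1 \<le> j \<and> j \<le> N \<and> (d1, d2, d3) \<in> Pre \<delta> d}
   \<union> {(Cell j (Sym Acc), 0, GsF) | j. j = 0 \<or> j = N + 1}
   \<union> {(Cell j d, 0, Gsr) | j d. (j = 0 \<or> j = N + 1) \<and> d \<noteq> Sym Acc}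
   \<union> {(Cell j d, 0, Gsz) | j d. j \<le> N + 1 \<and> init_conf q0 N w j = d}
   \<union> {(Gsz, 0, GsF), (Gsz, -1, Gsr)}
   \<union> {(Tri j d1 d2 d3, -1, Cell (j - 1) d1) | j d1 d2 d3. 1 \<le> j \<and> j \<le> N}
   \<union> {(Tri j d1 d2 d3, -1, Cell j d2) | j d1 d2 d3. 1 \<le> j \<and> j \<le> N}
   \<union> {(Tri j d1 d2 d3, -1, Cell (j + 1) d3) | j d1 d2 d3. 1 \<le> j \<and> j \<le> N}"

text \<open>Moves between configurations (state, counter value); the counter stays in nat,
  so a -1 transition is disabled at counter value 0.\<close>
definition ocg_move :: "'q tm_delta \<Rightarrow> 'q \<Rightarrow> 'q \<Rightarrow> nat \<Rightarrow> sym list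
     \<Rightarrow> 'q gstate \<times> nat \<Rightarrow> 'q gstate \<times> nat \<Rightarrow> bool" where
  "ocg_move \<delta> q0 qF N w x y =
     (\<exists>wt. (fst x, wt, fst y) \<in> ocg_trans \<delta> q0 qF N w \<and> int (snd y) = int (snd x) + wt)"

definition ocg_wins :: "'q tm_delta \<Rightarrow> 'q \<Rightarrow> 'q \<Rightarrow> nat \<Rightarrow> sym list \<Rightarrow> 'q gstate \<times> nat \<Rightarrow> bool" where
  "ocg_wins \<delta> q0 qF N w x =
     reach_wins (ocg_move \<delta> q0 qF N w) (\<lambda>c. verifier_state (fst c)) (\<lambda>c. fst c = GsF) x"

end

theory Submission
  imports Defs
begin


lemma legal_some: "legal_strategy mv vpos (\<lambda>h. SOME y. mv (last h) y)"
  unfolding legal_strategy_def by (auto intro: someI)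

lemma win_goal: "goal x \<Longrightarrow> reach_wins mv vpos goal x"
  unfolding reach_wins_def
  apply (rule exI[of _ "\<lambda>h. SOME y. mv (last h) y"])
  apply (intro conjI legal_some allI impI)
   apply (metis fin_play_def hd_in_set)
  apply (metis inf_play_def)
  done

lemma lift_fin:
  assumes fp: "fin_play mv vpos (\<lambda>h. \<sigma> (x # h)) y xs" and m: "mv x y" and c: "vpos x \<longrightarrow> y = \<sigma> [x]"
  shows "fin_play mv vpos \<sigma> x (x # xs)"
proof -
  obtain ys where xs: "xs = y # ys" using fp unfolding fin_play_def by (cases xs) auto
  have K: "\<forall>k. Suc k < length (x # xs) \<longrightarrow> mv ((x # xs) ! k) ((x # xs) ! Suc k) \<and>
          (vpos ((x # xs) ! k) \<longrightarrow> (x # xs) ! Suc k = \<sigma> (take (Suc k) (x # xs)))"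
  proof (intro allI impI)
    fix k assume k: "Suc k < length (x # xs)"
    show "mv ((x # xs) ! k) ((x # xs) ! Suc k) \<and>
          (vpos ((x # xs) ! k) \<longrightarrow> (x # xs) ! Suc k = \<sigma> (take (Suc k) (x # xs)))"
    proof (cases k)
      case 0 then show ?thesis using m c xs by simp
    next
      case (Suc k')
      with k have "Suc k' < length xs" by simp
      with fp have "mv (xs ! k') (xs ! Suc k') \<and> (vpos (xs ! k') \<longrightarrow> xs ! Suc k' = \<sigma> (x # take (Suc k') xs))"
        unfolding fin_play_def by blast
      then show ?thesis using Suc by simp
    qed
  qed
  have "\<not> (\<exists>z. mv (last (x # xs)) z)" using fp xs unfolding fin_play_def by simp
  with K show ?thesis unfolding fin_play_def by simp
qed

lemma map_case_nat: "map (case_nat x f) [0..<Suc k] = x # map f [0..<k]"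
  by (induction k) auto

lemma lift_inf:
  assumes fp: "inf_play mv vpos (\<lambda>h. \<sigma> (x # h)) y f" and m: "mv x y" and c: "vpos x \<longrightarrow> y = \<sigma> [x]"
  shows "inf_play mv vpos \<sigma> x (\<lambda>k. case k of 0 \<Rightarrow> x | Suc k \<Rightarrow> f k)"
proof -
  have K: "mv (case_nat x f k) (case_nat x f (Suc k)) \<and> (vpos (case_nat x f k) \<longrightarrow> case_nat x f (Suc k) = \<sigma> (map (case_nat x f) [0..<Suc k]))" for k
  proof (cases k)
    case 0 then show ?thesis using fp m c unfolding inf_play_def by simp
  next
    case (Suc k')
    from fp have "mv (f k') (f (Suc k')) \<and> (vpos (f k') \<longrightarrow> f (Suc k') = \<sigma> (x # map f [0..<Suc k']))"
      unfolding inf_play_def by blast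
    then show ?thesis using Suc by (simp del: upt_Suc add: map_case_nat)
  qed
  then show ?thesis unfolding inf_play_def by simp
qed

lemma legal_shift: "legal_strategy mv vpos \<sigma> \<Longrightarrow> legal_strategy mv vpos (\<lambda>h. \<sigma> (x # h))"
  unfolding legal_strategy_def
proof (intro allI impI)
  fix h assume L: "\<forall>h. h \<noteq> [] \<and> vpos (last h) \<and> (\<exists>y. mv (last h) y) \<longrightarrow> mv (last h) (\<sigma> h)"
    and h: "h \<noteq> [] \<and> vpos (last h) \<and> (\<exists>y. mv (last h) y)"
  from h have "last (x # h) = last h" by simp
  with L[rule_format, of "x # h"] h show "mv (last h) (\<sigma> (x # h))" by simp
qed

lemma lose_lift:
  assumes nog: "\<not> goal x" and mv: "mv x y" and c: "vpos x \<longrightarrow> y = \<sigma> [x]"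
    and L: "legal_strategy mv vpos \<sigma>"
    and W: "(\<forall>xs. fin_play mv vpos \<sigma> x xs \<longrightarrow> (\<exists>y \<in> set xs. goal y))"
           "(\<forall>f. inf_play mv vpos \<sigma> x f \<longrightarrow> (\<exists>k. goal (f k)))"
  shows "reach_wins mv vpos goal y"
  unfolding reach_wins_def
proof (rule exI[where x="\<lambda>h. \<sigma> (x # h)"], intro conjI allI impI)
  show "legal_strategy mv vpos (\<lambda>h. \<sigma> (x # h))" using L by (rule legal_shift)
next
  fix xs assume "fin_play mv vpos (\<lambda>h. \<sigma> (x # h)) y xs"
  from lift_fin[OF this mv c] W(1) have "\<exists>y\<in>set (x # xs). goal y" by blast
  with nog show "\<exists>y\<in>set xs. goal y" by auto
next
  fix f assume "inf_play mv vpos (\<lambda>h. \<sigma> (x # h)) y f"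
  from lift_inf[OF this mv c] W(2) obtain k where "goal (case k of 0 \<Rightarrow> x | Suc k \<Rightarrow> f k)" by blast
  with nog show "\<exists>k. goal (f k)" by (cases k) auto
qed

lemma stuck_lose:
  assumes "\<not> goal x" "\<not> (\<exists>y. mv x y)"
  shows "\<not> reach_wins mv vpos goal x"
proof
  assume "reach_wins mv vpos goal x"
  then obtain \<sigma> where "\<forall>xs. fin_play mv vpos \<sigma> x xs \<longrightarrow> (\<exists>y \<in> set xs. goal y)"
    unfolding reach_wins_def by blast
  moreover have "fin_play mv vpos \<sigma> x [x]" using assms unfolding fin_play_def by auto
  ultimately show False using assms by auto
qed

lemma combine:
  assumes mvx: "\<exists>y. mv x y" and yz: "vpos x \<longrightarrow> mv x yz"
    and win: "\<And>y. mv x y \<Longrightarrow> (vpos x \<longrightarrow> y = yz) \<Longrightarrow>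
         legal_strategy mv vpos (\<sigma>s y) \<and>
        (\<forall>xs. fin_play mv vpos (\<sigma>s y) y xs \<longrightarrow> (\<exists>z \<in> set xs. goal z)) \<and>
        (\<forall>f. inf_play mv vpos (\<sigma>s y) y f \<longrightarrow> (\<exists>k. goal (f k)))"
    and Lall: "\<And>y. legal_strategy mv vpos (\<sigma>s y)"
  shows "reach_wins mv vpos goal x"
proof -
  define \<sigma> where "\<sigma> h = (if 2 \<le> length h then \<sigma>s (h ! 1) (tl h)
      else if h = [x] \<and> vpos x then yz else SOME y. mv (last h) y)" for h
  have L: "legal_strategy mv vpos \<sigma>"
    unfolding legal_strategy_def
  proof (intro allI impI)
    fix h assume h: "h \<noteq> [] \<and> vpos (last h) \<and> (\<exists>y. mv (last h) y)"
    show "mv (last h) (\<sigma> h)"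
    proof (cases "2 \<le> length h")
      case True
      then have "tl h \<noteq> []" "last (tl h) = last h" by (cases h; auto)+
      have "mv (last (tl h)) (\<sigma>s (h ! 1) (tl h))"
        using Lall[of "h ! 1"] h \<open>tl h \<noteq> []\<close> \<open>last (tl h) = last h\<close>
        unfolding legal_strategy_def by metis
      with True \<open>last (tl h) = last h\<close> show ?thesis unfolding \<sigma>_def by simp
    next
      case False
      then show ?thesis using h yz unfolding \<sigma>_def by (auto intro: someI)
    qed
  qed
  show ?thesis unfolding reach_wins_def
  proof (rule exI[where x=\<sigma>], intro conjI allI impI, rule L)
    fix xs assume fp: "fin_play mv vpos \<sigma> x xs"
    then obtain xs' where xs: "xs = x # xs'" unfolding fin_play_def by (cases xs) auto
    have "xs' \<noteq> []" using fp mvx xs unfolding fin_play_def by auto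
    then obtain y ys where xs': "xs' = y # ys" by (cases xs') auto
    have my: "mv x y" and cy: "vpos x \<longrightarrow> y = yz"
      using fp unfolding fin_play_def xs xs' by (auto dest: spec[of _ 0] simp: \<sigma>_def)
    have K: "\<forall>k. Suc k < length xs' \<longrightarrow> mv (xs' ! k) (xs' ! Suc k) \<and>
        (vpos (xs' ! k) \<longrightarrow> xs' ! Suc k = \<sigma>s y (take (Suc k) xs'))"
    proof (intro allI impI)
      fix k assume k: "Suc k < length xs'"
      from fp k have "mv (xs ! Suc k) (xs ! Suc (Suc k)) \<and> (vpos (xs ! Suc k) \<longrightarrow> xs ! Suc (Suc k) = \<sigma> (take (Suc (Suc k)) xs))"
        unfolding fin_play_def xs by auto
      then show "mv (xs' ! k) (xs' ! Suc k) \<and>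
        (vpos (xs' ! k) \<longrightarrow> xs' ! Suc k = \<sigma>s y (take (Suc k) xs'))"
        unfolding xs xs' \<sigma>_def by auto
    qed
    have "\<not> (\<exists>z. mv (last xs') z)" using fp unfolding fin_play_def xs xs' by auto
    with K have "fin_play mv vpos (\<sigma>s y) y xs'" unfolding fin_play_def by (simp add: xs')
    with win[OF my cy] have "\<exists>z\<in>set xs'. goal z" by blast
    then show "\<exists>z\<in>set xs. goal z" using xs by auto
  next
    fix f assume fp: "inf_play mv vpos \<sigma> x f"
    have my: "mv x (f 1)" and cy: "vpos x \<longrightarrow> f 1 = yz"
      using fp unfolding inf_play_def by (auto dest: spec[of _ 0] simp: \<sigma>_def)
    have mp: "map f [0..<Suc (Suc k)] = f 0 # map (\<lambda>i. f (Suc i)) [0..<Suc k]" for k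
      by (simp del: upt_Suc add: upt_conv_Cons map_Suc_upt[symmetric] o_def)
    have "inf_play mv vpos (\<sigma>s (f 1)) (f 1) (\<lambda>i. f (Suc i))"
    proof -
      have "mv (f (Suc k)) (f (Suc (Suc k))) \<and>
        (vpos (f (Suc k)) \<longrightarrow> f (Suc (Suc k)) = \<sigma>s (f 1) (map (\<lambda>i. f (Suc i)) [0..<Suc k]))" for k
      proof -
        from fp have "mv (f (Suc k)) (f (Suc (Suc k))) \<and> (vpos (f (Suc k)) \<longrightarrow> f (Suc (Suc k)) = \<sigma> (map f [0..<Suc (Suc k)]))"
          unfolding inf_play_def by blast
        then show ?thesis
          unfolding mp \<sigma>_def by (auto simp del: upt_Suc)
      qed
      then show ?thesis unfolding inf_play_def by simp
    qed
    with win[OF my cy] obtain k where "goal (f (Suc k))" by blast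
    then show "\<exists>k. goal (f k)" by blast
  qed
qed

lemma win_V:
  assumes "vpos x" "\<not> goal x"
  shows "reach_wins mv vpos goal x \<longleftrightarrow> (\<exists>y. mv x y \<and> reach_wins mv vpos goal y)"
proof
  assume W: "reach_wins mv vpos goal x"
  show "\<exists>y. mv x y \<and> reach_wins mv vpos goal y"
  proof (cases "\<exists>y. mv x y")
    case False
    have "\<not> reach_wins mv vpos goal x" by (rule stuck_lose) (use assms False in auto)
    with W show ?thesis by blast
  next
    case True
    from W obtain \<sigma> where s: "legal_strategy mv vpos \<sigma>"
      "\<forall>xs. fin_play mv vpos \<sigma> x xs \<longrightarrow> (\<exists>y \<in> set xs. goal y)"
      "\<forall>f. inf_play mv vpos \<sigma> x f \<longrightarrow> (\<exists>k. goal (f k))" unfolding reach_wins_def by blast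
    have m: "mv x (\<sigma> [x])" using s(1) True assms unfolding legal_strategy_def by force
    have "reach_wins mv vpos goal (\<sigma> [x])"
      by (rule lose_lift[OF assms(2) m _ s(1) s(2) s(3)]) simp
    with m show ?thesis by blast
  qed
next
  assume "\<exists>y. mv x y \<and> reach_wins mv vpos goal y"
  then obtain y where y: "mv x y" "reach_wins mv vpos goal y" by blast
  then obtain \<sigma> where s: "legal_strategy mv vpos \<sigma>"
      "\<forall>xs. fin_play mv vpos \<sigma> y xs \<longrightarrow> (\<exists>y \<in> set xs. goal y)"
      "\<forall>f. inf_play mv vpos \<sigma> y f \<longrightarrow> (\<exists>k. goal (f k))" unfolding reach_wins_def by blast
  show "reach_wins mv vpos goal x"
  proof (rule combine[where yz=y and \<sigma>s="\<lambda>_. \<sigma>"])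
    show "\<exists>y. mv x y" using y by blast
    show "vpos x \<longrightarrow> mv x y" using y by blast
    show "legal_strategy mv vpos \<sigma>" for y' using s(1) .
    fix y' assume "mv x y'" "vpos x \<longrightarrow> y' = y"
    then have "y' = y" using assms by simp
    then show "legal_strategy mv vpos \<sigma> \<and>
        (\<forall>xs. fin_play mv vpos \<sigma> y' xs \<longrightarrow> (\<exists>z \<in> set xs. goal z)) \<and>
        (\<forall>f. inf_play mv vpos \<sigma> y' f \<longrightarrow> (\<exists>k. goal (f k)))" using s by simp
  qed
qed

lemma win_F:
  assumes "\<not> vpos x" "\<not> goal x"
  shows "reach_wins mv vpos goal x \<longleftrightarrow> (\<exists>y. mv x y) \<and> (\<forall>y. mv x y \<longrightarrow> reach_wins mv vpos goal y)"
proof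
  assume W: "reach_wins mv vpos goal x"
  from W obtain \<sigma> where s: "legal_strategy mv vpos \<sigma>"
      "\<forall>xs. fin_play mv vpos \<sigma> x xs \<longrightarrow> (\<exists>y \<in> set xs. goal y)"
      "\<forall>f. inf_play mv vpos \<sigma> x f \<longrightarrow> (\<exists>k. goal (f k))" unfolding reach_wins_def by blast
  show "(\<exists>y. mv x y) \<and> (\<forall>y. mv x y \<longrightarrow> reach_wins mv vpos goal y)"
  proof
    show "\<exists>y. mv x y"
    proof (rule ccontr)
      assume "\<not> (\<exists>y. mv x y)"
      then have "\<not> reach_wins mv vpos goal x" by (intro stuck_lose assms(2))
      with W show False by blast
    qed
    show "\<forall>y. mv x y \<longrightarrow> reach_wins mv vpos goal y"
    proof (intro allI impI)
      fix y assume m: "mv x y"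
      show "reach_wins mv vpos goal y"
        by (rule lose_lift[OF assms(2) m _ s(1) s(2) s(3)]) (simp add: assms(1))
    qed
  qed
next
  assume A: "(\<exists>y. mv x y) \<and> (\<forall>y. mv x y \<longrightarrow> reach_wins mv vpos goal y)"
  define \<sigma>s where "\<sigma>s y = (if reach_wins mv vpos goal y then (SOME \<sigma>. legal_strategy mv vpos \<sigma> \<and>
        (\<forall>xs. fin_play mv vpos \<sigma> y xs \<longrightarrow> (\<exists>z \<in> set xs. goal z)) \<and>
        (\<forall>f. inf_play mv vpos \<sigma> y f \<longrightarrow> (\<exists>k. goal (f k)))) else (\<lambda>h. SOME y. mv (last h) y))" for y
  have sp: "legal_strategy mv vpos (\<sigma>s y) \<and>
        (\<forall>xs. fin_play mv vpos (\<sigma>s y) y xs \<longrightarrow> (\<exists>z \<in> set xs. goal z)) \<and>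
        (\<forall>f. inf_play mv vpos (\<sigma>s y) y f \<longrightarrow> (\<exists>k. goal (f k)))" if "reach_wins mv vpos goal y" for y
    unfolding \<sigma>s_def if_P[OF that] by (rule someI_ex[OF that[unfolded reach_wins_def]])
  have La: "legal_strategy mv vpos (\<sigma>s y)" for y
  proof (cases "reach_wins mv vpos goal y")
    case True then show ?thesis using sp by blast
  next
    case False then show ?thesis unfolding \<sigma>s_def using legal_some[of mv vpos] by simp
  qed
  show "reach_wins mv vpos goal x"
  proof (rule combine[where yz=x and \<sigma>s=\<sigma>s])
    show "\<exists>y. mv x y" using A by blast
    show "vpos x \<longrightarrow> mv x x" using assms by simp
    show "legal_strategy mv vpos (\<sigma>s y)" for y by (rule La)
    fix y assume "mv x y"
    with A have "reach_wins mv vpos goal y" by blast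
    then show "legal_strategy mv vpos (\<sigma>s y) \<and>
        (\<forall>xs. fin_play mv vpos (\<sigma>s y) y xs \<longrightarrow> (\<exists>z \<in> set xs. goal z)) \<and>
        (\<forall>f. inf_play mv vpos (\<sigma>s y) y f \<longrightarrow> (\<exists>k. goal (f k)))" by (rule sp)
  qed
qed



lemma mv_Gsr: "\<not> ocg_move \<delta> q0 qF N w (Gsr, c) y"
  unfolding ocg_move_def ocg_trans_def by auto

lemma mv_Gsz: "ocg_move \<delta> q0 qF N w (Gsz, c) y \<longleftrightarrow> y = (GsF, c) \<or> (1 \<le> c \<and> y = (Gsr, c - 1))"
  unfolding ocg_move_def ocg_trans_def by (cases y) auto

lemma mv_Tri: "1 \<le> j \<Longrightarrow> j \<le> N \<Longrightarrow> ocg_move \<delta> q0 qF N w (Tri j d1 d2 d3, c) y \<longleftrightarrow>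
   (1 \<le> c \<and> (y = (Cell (j-1) d1, c-1) \<or> y = (Cell j d2, c-1) \<or> y = (Cell (j+1) d3, c-1)))"
  unfolding ocg_move_def ocg_trans_def apply (cases y) apply (simp add: conj_disj_distribR ex_disj_distrib) apply auto done

lemma mv_Cell: "ocg_move \<delta> q0 qF N w (Cell j d, c) y \<longleftrightarrow>
   ((1\<le>j \<and> j\<le>N \<and> (\<exists>d1 d2 d3. (d1,d2,d3) \<in> Pre \<delta> d \<and> y = (Tri j d1 d2 d3, c)))
   \<or> ((j=0 \<or> j=N+1) \<and> d = Sym Acc \<and> y = (GsF,c))
   \<or> ((j=0 \<or> j=N+1) \<and> d \<noteq> Sym Acc \<and> y = (Gsr,c))
   \<or> (j \<le> N+1 \<and> init_conf q0 N w j = d \<and> y = (Gsz,c)))"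
  unfolding ocg_move_def ocg_trans_def apply (cases y) apply (simp add: conj_disj_distribR ex_disj_distrib) apply (rule iffI; (elim disjE exE conjE)?; simp; blast?) done


lemma W_def': "ocg_wins \<delta> q0 qF N w x = reach_wins (ocg_move \<delta> q0 qF N w) (\<lambda>c. verifier_state (fst c)) (\<lambda>c. fst c = GsF) x"
  by (simp add: ocg_wins_def)

lemma W_GsF: "ocg_wins \<delta> q0 qF N w (GsF, c)"
  unfolding W_def' by (rule win_goal) simp

lemma W_Gsr: "\<not> ocg_wins \<delta> q0 qF N w (Gsr, c)"
  unfolding W_def' by (rule stuck_lose) (auto simp: mv_Gsr)

lemma W_Gsz0: "ocg_wins \<delta> q0 qF N w (Gsz, 0)"
  unfolding W_def' by (subst win_F) (auto simp: mv_Gsz W_GsF[unfolded W_def'])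

lemma W_GszS: "\<not> ocg_wins \<delta> q0 qF N w (Gsz, Suc c)"
  unfolding W_def' by (subst win_F) (auto simp: mv_Gsz W_Gsr[unfolded W_def'])

lemma W_Tri0: "1 \<le> j \<Longrightarrow> j \<le> N \<Longrightarrow> \<not> ocg_wins \<delta> q0 qF N w (Tri j d1 d2 d3, 0)"
  unfolding W_def' by (rule stuck_lose) (auto simp: mv_Tri)

lemma W_TriS: "1 \<le> j \<Longrightarrow> j \<le> N \<Longrightarrow> ocg_wins \<delta> q0 qF N w (Tri j d1 d2 d3, Suc c) \<longleftrightarrow>
   ocg_wins \<delta> q0 qF N w (Cell (j-1) d1, c) \<and> ocg_wins \<delta> q0 qF N w (Cell j d2, c) \<and> ocg_wins \<delta> q0 qF N w (Cell (j+1) d3, c)"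
  unfolding W_def' by (subst win_F) (auto simp: mv_Tri)

lemma init_border: "j = 0 \<or> j = N + 1 \<Longrightarrow> init_conf q0 N w j = Sym Acc"
  unfolding init_conf_def by auto

lemma W_border: "j = 0 \<or> j = N + 1 \<Longrightarrow> ocg_wins \<delta> q0 qF N w (Cell j d, c) \<longleftrightarrow> d = Sym Acc"
proof -
  assume j: "j = 0 \<or> j = N + 1"
  let ?M = "ocg_move \<delta> q0 qF N w" and ?R = "reach_wins (ocg_move \<delta> q0 qF N w) (\<lambda>c. verifier_state (fst c)) (\<lambda>c. fst c = GsF)"
  have "?R (Cell j d, c) \<longleftrightarrow> (\<exists>y. ?M (Cell j d, c) y \<and> ?R y)" by (rule win_V) simp_all
  also have "\<dots> \<longleftrightarrow> d = Sym Acc"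
  proof
    assume "\<exists>y. ?M (Cell j d, c) y \<and> ?R y"
    then obtain y where m: "?M (Cell j d, c) y" and r: "?R y" by blast
    have "\<not> (1 \<le> j \<and> j \<le> N)" using j by auto
    with m have "(d = Sym Acc \<and> y = (GsF,c)) \<or> (d \<noteq> Sym Acc \<and> y = (Gsr,c)) \<or> (init_conf q0 N w j = d \<and> y = (Gsz,c))"
      unfolding mv_Cell using j by blast
    then show "d = Sym Acc" using r W_Gsr[unfolded W_def'] init_border[OF j] by metis
  next
    assume "d = Sym Acc"
    then have "?M (Cell j d, c) (GsF, c)" unfolding mv_Cell using j by blast
    with W_GsF[unfolded W_def', of \<delta> q0 qF N w c] show "\<exists>y. ?M (Cell j d, c) y \<and> ?R y" by blast
  qed
  finally show ?thesis unfolding W_def' .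
qed

lemma W_in: "1 \<le> j \<Longrightarrow> j \<le> N \<Longrightarrow> ocg_wins \<delta> q0 qF N w (Cell j d, c) \<longleftrightarrow>
   (\<exists>d1 d2 d3. (d1,d2,d3) \<in> Pre \<delta> d \<and> ocg_wins \<delta> q0 qF N w (Tri j d1 d2 d3, c))
   \<or> (init_conf q0 N w j = d \<and> ocg_wins \<delta> q0 qF N w (Gsz, c))"
proof -
  assume j: "1 \<le> j" "j \<le> N"
  let ?M = "ocg_move \<delta> q0 qF N w" and ?R = "reach_wins (ocg_move \<delta> q0 qF N w) (\<lambda>c. verifier_state (fst c)) (\<lambda>c. fst c = GsF)"
  have "?R (Cell j d, c) \<longleftrightarrow> (\<exists>y. ?M (Cell j d, c) y \<and> ?R y)" by (rule win_V) simp_all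
  also have "\<dots> \<longleftrightarrow> (\<exists>d1 d2 d3. (d1,d2,d3) \<in> Pre \<delta> d \<and> ?R (Tri j d1 d2 d3, c))
   \<or> (init_conf q0 N w j = d \<and> ?R (Gsz, c))"
  proof
    assume "\<exists>y. ?M (Cell j d, c) y \<and> ?R y"
    then obtain y where m: "?M (Cell j d, c) y" and r: "?R y" by blast
    have "j \<noteq> 0" "j \<noteq> N + 1" using j by auto
    with m have "(\<exists>d1 d2 d3. (d1, d2, d3) \<in> Pre \<delta> d \<and> y = (Tri j d1 d2 d3, c)) \<or> (init_conf q0 N w j = d \<and> y = (Gsz,c))"
      unfolding mv_Cell by blast
    then show "(\<exists>d1 d2 d3. (d1,d2,d3) \<in> Pre \<delta> d \<and> ?R (Tri j d1 d2 d3, c))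
     \<or> (init_conf q0 N w j = d \<and> ?R (Gsz, c))" using r by blast
  next
    assume "(\<exists>d1 d2 d3. (d1,d2,d3) \<in> Pre \<delta> d \<and> ?R (Tri j d1 d2 d3, c))
     \<or> (init_conf q0 N w j = d \<and> ?R (Gsz, c))"
    then show "\<exists>y. ?M (Cell j d, c) y \<and> ?R y"
    proof
      assume "\<exists>d1 d2 d3. (d1,d2,d3) \<in> Pre \<delta> d \<and> ?R (Tri j d1 d2 d3, c)"
      then obtain d1 d2 d3 where "(d1,d2,d3) \<in> Pre \<delta> d" "?R (Tri j d1 d2 d3, c)" by blast
      moreover have "?M (Cell j d, c) (Tri j d1 d2 d3, c)" unfolding mv_Cell using j calculation by blast
      ultimately show ?thesis by blast
    next
      assume a: "init_conf q0 N w j = d \<and> ?R (Gsz, c)"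
      moreover have "?M (Cell j d, c) (Gsz, c)" unfolding mv_Cell using j a by auto
      ultimately show ?thesis by blast
    qed
  qed
  finally show ?thesis unfolding W_def' .
qed



lemma not_head_Sym: "\<not> is_head x \<Longrightarrow> x = Sym (sym_of x)"
  by (cases x) auto

lemma head_Head: "is_head x \<Longrightarrow> x = Head (state_of x) (sym_of x)"
  by (cases x) auto

lemma Pre_fun: "t \<in> Pre \<delta> d \<Longrightarrow> t \<in> Pre \<delta> d' \<Longrightarrow> d = d'"
  unfolding Pre_def by auto

lemma step_cell:
  fixes C :: "'q config"
  assumes hp: "is_head (C p)" and un: "\<And>p'. is_head (C p') \<Longrightarrow> p' = p" and p1: "1 \<le> p"
    and j1: "1 \<le> j"
  shows "(C (j-1), C j, C (j+1)) \<in> Pre \<delta> (tm_step \<delta> C j)"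
proof -
  have hpos: "head_pos C = p" unfolding head_pos_def
    apply (rule Least_equality) apply (rule hp) using un by (metis order_refl)
  obtain q b where Cp: "C p = Head q b" using head_Head[OF hp] by blast
  define p' where "p' = (if delta3 \<delta> q b = MRight then p + 1 else p - 1)"
  have pp: "p' \<noteq> p" using p1 unfolding p'_def by auto
  have step: "tm_step \<delta> C = C(p := Sym (delta2 \<delta> q b), p' := Head (delta1 \<delta> q b) (sym_of (C p')))"
    unfolding tm_step_def hpos Let_def Cp p'_def by simp
  have sym: "x \<noteq> p \<Longrightarrow> \<exists>s. C x = Sym s" for x
    using not_head_Sym un by metis
  consider "p = j - 1" | "p = j" | "p = j + 1" | "p \<noteq> j - 1 \<and> p \<noteq> j \<and> p \<noteq> j + 1" by blast
  then show ?thesis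
  proof cases
    case 1
    then have "j \<noteq> p" "j + 1 \<noteq> p" using j1 by auto
    obtain s1 s2 where cj: "C j = Sym s1" "C (j+1) = Sym s2" using sym \<open>j \<noteq> p\<close> \<open>j + 1 \<noteq> p\<close> by metis
    show ?thesis
    proof (cases "delta3 \<delta> q b = MRight")
      case True
      then have "p' = j" using 1 j1 unfolding p'_def by auto
      then show ?thesis unfolding step using 1 True Cp cj \<open>j \<noteq> p\<close>
        unfolding Pre_def by simp
    next
      case False
      then have "p' \<noteq> j" using 1 j1 unfolding p'_def by auto
      then show ?thesis unfolding step using 1 False Cp cj \<open>j \<noteq> p\<close>
        unfolding Pre_def by simp
    qed
  next
    case 2
    then have "j - 1 \<noteq> p" "j + 1 \<noteq> p" using j1 by auto
    obtain s1 s2 where cj: "C (j-1) = Sym s1" "C (j+1) = Sym s2" using sym \<open>j - 1 \<noteq> p\<close> \<open>j + 1 \<noteq> p\<close> by metis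
    show ?thesis unfolding step using 2 Cp cj pp
      unfolding Pre_def by simp
  next
    case 3
    then have "j \<noteq> p" "j - 1 \<noteq> p" using j1 by auto
    obtain s1 s2 where cj: "C j = Sym s1" "C (j-1) = Sym s2" using sym \<open>j \<noteq> p\<close> \<open>j - 1 \<noteq> p\<close> by metis
    show ?thesis
    proof (cases "delta3 \<delta> q b = MLeft")
      case True
      then have "p' = j" using 3 j1 unfolding p'_def by (cases "delta3 \<delta> q b") auto
      then show ?thesis unfolding step using 3 True Cp cj \<open>j \<noteq> p\<close>
        unfolding Pre_def by simp
    next
      case False
      then have "delta3 \<delta> q b = MRight" by (cases "delta3 \<delta> q b") auto
      then have "p' \<noteq> j" using 3 j1 unfolding p'_def by auto
      then show ?thesis unfolding step using 3 False Cp cj \<open>j \<noteq> p\<close>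
        unfolding Pre_def by simp
    qed
  next
    case 4
    then have "j \<noteq> p" "j - 1 \<noteq> p" "j + 1 \<noteq> p" by auto
    obtain s1 s2 s3 where cj: "C j = Sym s1" "C (j-1) = Sym s2" "C (j+1) = Sym s3"
      using sym \<open>j \<noteq> p\<close> \<open>j - 1 \<noteq> p\<close> \<open>j + 1 \<noteq> p\<close> by metis
    have "p' \<noteq> j" using 4 j1 unfolding p'_def by auto
    then show ?thesis unfolding step using 4 cj \<open>j \<noteq> p\<close>
      unfolding Pre_def by simp
  qed
qed


lemma tm_run_Suc: "tm_run \<delta> q0 N w (Suc i) = tm_step \<delta> (tm_run \<delta> q0 N w i)"
  unfolding tm_run_def by simp

lemma tm_run_0: "tm_run \<delta> q0 N w 0 = init_conf q0 N w"
  unfolding tm_run_def by simp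

lemma run_exists_Suc: "run_exists \<delta> q0 N w (Suc i) \<Longrightarrow> run_exists \<delta> q0 N w i"
  unfolding run_exists_def by auto

lemma inv_run:
  assumes N1: "1 \<le> N"
    and space: "\<forall>i p. run_exists \<delta> q0 N w i \<and> is_head (tm_run \<delta> q0 N w i p) \<longrightarrow> 1 \<le> p \<and> p \<le> N"
  shows "run_exists \<delta> q0 N w i \<Longrightarrow> tm_run \<delta> q0 N w i 0 = Sym Acc \<and> tm_run \<delta> q0 N w i (N+1) = Sym Acc
     \<and> (\<exists>p. is_head (tm_run \<delta> q0 N w i p) \<and> (\<forall>p'. is_head (tm_run \<delta> q0 N w i p') \<longrightarrow> p' = p))"
proof (induction i)
  case 0
  have "is_head (init_conf q0 N w p') \<longleftrightarrow> p' = 1" for p'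
    using N1 unfolding init_conf_def by auto
  then show ?case unfolding tm_run_0 by (auto simp: init_conf_def)
next
  case (Suc i)
  let ?C = "tm_run \<delta> q0 N w i"
  have ri: "run_exists \<delta> q0 N w i" using Suc.prems by (rule run_exists_Suc)
  with Suc.IH obtain p where c0: "?C 0 = Sym Acc" "?C (N+1) = Sym Acc" and hp: "is_head (?C p)"
    and un: "\<And>p'. is_head (?C p') \<Longrightarrow> p' = p" by blast
  have p1: "1 \<le> p" "p \<le> N" using space ri hp by blast+
  have hpos: "head_pos ?C = p" unfolding head_pos_def
    apply (rule Least_equality) apply (rule hp) using un by (metis order_refl)
  obtain q b where Cp: "?C p = Head q b" using head_Head[OF hp] by blast
  define p' where "p' = (if delta3 \<delta> q b = MRight then p + 1 else p - 1)"
  have pp: "p' \<noteq> p" using p1 unfolding p'_def by auto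
  have step: "tm_run \<delta> q0 N w (Suc i) = ?C(p := Sym (delta2 \<delta> q b), p' := Head (delta1 \<delta> q b) (sym_of (?C p')))"
    unfolding tm_run_Suc tm_step_def hpos Let_def Cp p'_def by simp
  have hd: "is_head (tm_run \<delta> q0 N w (Suc i) x) \<longleftrightarrow> x = p'" for x
    unfolding step using un pp by auto
  have p'1: "1 \<le> p'" "p' \<le> N" using space Suc.prems hd by blast+
  show ?case
    unfolding step using c0 p1 p'1 hd[unfolded step] by auto
qed

lemma Pre_iff:
  assumes hp: "is_head (C p)" and un: "\<And>p'. is_head (C p') \<Longrightarrow> p' = p" and p1: "1 \<le> p"
    and j1: "1 \<le> j"
  shows "(C (j-1), C j, C (j+1)) \<in> Pre \<delta> d \<longleftrightarrow> tm_step \<delta> C j = d"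
  using step_cell[where C=C and p=p and j=j and \<delta>=\<delta>, OF hp un p1 j1] Pre_fun by metis


theorem mainTheorem6:
  fixes \<delta> :: "'q::finite tm_delta" and q0 qF :: 'q and w :: "sym list" and k N :: nat
  defines "N \<equiv> 2 ^ (2 ^ (length w ^ k))"
  assumes input: "set w \<subseteq> {S0, S1}"
    and space: "\<forall>i p. run_exists \<delta> q0 N w i \<and> is_head (tm_run \<delta> q0 N w i p) \<longrightarrow> 1 \<le> p \<and> p \<le> N"
    and accept: "\<forall>i p q. run_exists \<delta> q0 N w i \<and> tm_run \<delta> q0 N w i p = Head q Acc
                   \<longrightarrow> q = qF \<and> p = 1"
  shows "(\<forall>j d i. 1 \<le> j \<and> j \<le> N \<and> run_exists \<delta> q0 N w i \<longrightarrow>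
            (ocg_wins \<delta> q0 qF N w (Cell j d, i) \<longleftrightarrow> tm_run \<delta> q0 N w i j = d))
       \<and> (\<forall>i. run_exists \<delta> q0 N w i \<longrightarrow>
            (ocg_wins \<delta> q0 qF N w (Cell 1 (Head qF Acc), i) \<longleftrightarrow> tm_run \<delta> q0 N w i 1 = Head qF Acc))"
proof -
  have N1: "1 \<le> N" unfolding N_def by simp
  have main: "run_exists \<delta> q0 N w i \<Longrightarrow> \<forall>j d. 1 \<le> j \<and> j \<le> N \<longrightarrow>
     (ocg_wins \<delta> q0 qF N w (Cell j d, i) \<longleftrightarrow> tm_run \<delta> q0 N w i j = d)" for i
  proof (induction i)
    case 0
    show ?case
    proof (intro allI impI)
      fix j d assume j: "1 \<le> j \<and> j \<le> N"
      show "ocg_wins \<delta> q0 qF N w (Cell j d, 0) \<longleftrightarrow> tm_run \<delta> q0 N w 0 j = d"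
        unfolding W_in[of j N, OF conjunct1[OF j] conjunct2[OF j]] tm_run_0
        using W_Tri0[of j N \<delta> q0 qF w] W_Gsz0[of \<delta> q0 qF N w] j by blast
    qed
  next
    case (Suc i)
    let ?C = "tm_run \<delta> q0 N w i"
    let ?W = "ocg_wins \<delta> q0 qF N w"
    have ri: "run_exists \<delta> q0 N w i" using Suc.prems by (rule run_exists_Suc)
    with inv_run[OF N1 space] obtain p where c0: "?C 0 = Sym Acc" "?C (N+1) = Sym Acc" and hp: "is_head (?C p)"
      and un: "\<And>p'. is_head (?C p') \<Longrightarrow> p' = p" by blast
    have p1: "1 \<le> p" using space ri hp by blast
    have IH: "\<forall>j d. 1 \<le> j \<and> j \<le> N \<longrightarrow> (?W (Cell j d, i) \<longleftrightarrow> ?C j = d)" using Suc.IH ri by blast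
    show ?case
    proof (intro allI impI)
      fix j d assume j: "1 \<le> j \<and> j \<le> N"
      have cw: "?W (Cell k e, i) \<longleftrightarrow> ?C k = e" if "k \<le> N + 1" for k e
      proof (cases "k = 0 \<or> k = N + 1")
        case True
        then show ?thesis using W_border[of k N \<delta> q0 qF w e i, OF True] c0 by auto
      next
        case False
        then show ?thesis using IH that by auto
      qed
      have "?W (Cell j d, Suc i) \<longleftrightarrow>
         (\<exists>d1 d2 d3. (d1,d2,d3) \<in> Pre \<delta> d \<and> ?W (Cell (j-1) d1, i) \<and> ?W (Cell j d2, i) \<and> ?W (Cell (j+1) d3, i))"
        using W_in[of j N \<delta> q0 qF w d "Suc i", OF conjunct1[OF j] conjunct2[OF j]]
          W_TriS[of j N \<delta> q0 qF w _ _ _ i, OF conjunct1[OF j] conjunct2[OF j]] W_GszS[of \<delta> q0 qF N w i] by blast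
      also have "\<dots> \<longleftrightarrow> (\<exists>d1 d2 d3. (d1,d2,d3) \<in> Pre \<delta> d \<and> ?C (j-1) = d1 \<and> ?C j = d2 \<and> ?C (j+1) = d3)"
        using cw[of "j-1"] cw[of j] cw[of "j+1"] j by auto
      also have "\<dots> \<longleftrightarrow> (?C (j-1), ?C j, ?C (j+1)) \<in> Pre \<delta> d" by blast
      also have "\<dots> \<longleftrightarrow> tm_step \<delta> ?C j = d" by (rule Pre_iff[where C="?C" and p=p and j=j, OF hp un p1 conjunct1[OF j]])
      finally show "?W (Cell j d, Suc i) \<longleftrightarrow> tm_run \<delta> q0 N w (Suc i) j = d" unfolding tm_run_Suc .
    qed
  qed
  show ?thesis using main N1 by auto
qed


end
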